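(* Let $T$ be an unmixed tree. Then the stable complex $\mathcal{S}(T)$ is shellable.
   Context: For a finite simple graph $G=(V,E)$, $N(v)=\{u: uv\in E\}$ and $N(D)=\bigcup_{v\in D}N(v)$. A set $D\subseteq V$ is a total dominating set (TD-set) if $N(D)=V$, and a minimal TD-set if no proper subset is a TD-set. $G$ is unmixed if all minimal TD-sets of $G$ have the same size. The stable complex $\mathcal{S}(G)$ is the simplicial complex on $V$ whose facets are the sets $V\setminus D$ with $D$ a minimal TD-set of $G$. A pure simplicial complex is shellable if its facets admit an ordering $F_1,\dots,F_m$ such that for all $1\le i<j\le m$ there exist $v\in F_j\setminus F_i$ and $k<j$ with $F_j\setminus F_k=\{v\}$. *)

theory Defs
  imports Main
begin

definition simple_graph :: "'a set \<Rightarrow> 'a set set \<Rightarrow> bool" where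
  "simple_graph V E \<longleftrightarrow> finite V \<and> (\<forall>e\<in>E. e \<subseteq> V \<and> card e = 2)"

definition nbhd :: "'a set set \<Rightarrow> 'a \<Rightarrow> 'a set" where
  "nbhd E v = {u. {u, v} \<in> E}"

definition nbhd_set :: "'a set set \<Rightarrow> 'a set \<Rightarrow> 'a set" where
  "nbhd_set E D = (\<Union>v\<in>D. nbhd E v)"

definition is_walk :: "'a set \<Rightarrow> 'a set set \<Rightarrow> 'a list \<Rightarrow> bool" where
  "is_walk V E p \<longleftrightarrow> p \<noteq> [] \<and> set p \<subseteq> V \<and>
     (\<forall>i. Suc i < length p \<longrightarrow> {p ! i, p ! Suc i} \<in> E)"

definition connected_graph :: "'a set \<Rightarrow> 'a set set \<Rightarrow> bool" where
  "connected_graph V E \<longleftrightarrow> V \<noteq> {} \<and>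
     (\<forall>u\<in>V. \<forall>v\<in>V. \<exists>p. is_walk V E p \<and> hd p = u \<and> last p = v)"

definition has_cycle :: "'a set \<Rightarrow> 'a set set \<Rightarrow> bool" where
  "has_cycle V E \<longleftrightarrow> (\<exists>p. is_walk V E p \<and> distinct p \<and> length p \<ge> 3 \<and> {last p, hd p} \<in> E)"

definition is_tree :: "'a set \<Rightarrow> 'a set set \<Rightarrow> bool" where
  "is_tree V E \<longleftrightarrow> simple_graph V E \<and> connected_graph V E \<and> \<not> has_cycle V E"

definition total_dom_set :: "'a set \<Rightarrow> 'a set set \<Rightarrow> 'a set \<Rightarrow> bool" where
  "total_dom_set V E D \<longleftrightarrow> D \<subseteq> V \<and> nbhd_set E D = V"

definition minimal_total_dom_set :: "'a set \<Rightarrow> 'a set set \<Rightarrow> 'a set \<Rightarrow> bool" where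
  "minimal_total_dom_set V E D \<longleftrightarrow> total_dom_set V E D \<and>
     (\<forall>D'. D' \<subset> D \<longrightarrow> \<not> total_dom_set V E D')"

definition unmixed :: "'a set \<Rightarrow> 'a set set \<Rightarrow> bool" where
  "unmixed V E \<longleftrightarrow> (\<forall>D1 D2. minimal_total_dom_set V E D1 \<longrightarrow> minimal_total_dom_set V E D2
      \<longrightarrow> card D1 = card D2)"

definition stable_complex_facets :: "'a set \<Rightarrow> 'a set set \<Rightarrow> 'a set set" where
  "stable_complex_facets V E = {V - D | D. minimal_total_dom_set V E D}"

definition pure_facets :: "'a set set \<Rightarrow> bool" where
  "pure_facets \<F> \<longleftrightarrow> (\<forall>F\<in>\<F>. \<forall>G\<in>\<F>. card F = card G)"

definition shelling_order :: "'a set list \<Rightarrow> bool" where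
  "shelling_order Fs \<longleftrightarrow> (\<forall>i j. i < j \<longrightarrow> j < length Fs \<longrightarrow>
     (\<exists>v \<in> Fs ! j - Fs ! i. \<exists>k < j. Fs ! j - Fs ! k = {v}))"

definition shellable :: "'a set set \<Rightarrow> bool" where
  "shellable \<F> \<longleftrightarrow> pure_facets \<F> \<and>
     (\<exists>Fs. distinct Fs \<and> set Fs = \<F> \<and> shelling_order Fs)"

end

theory Submission
  imports Defs
begin

definition indep :: "'a set set \<Rightarrow> 'a set \<Rightarrow> bool" where
  "indep H F \<longleftrightarrow> (\<forall>e\<in>H. \<not> e \<subseteq> F)"

definition fcts :: "'a set \<Rightarrow> 'a set set \<Rightarrow> 'a set set" where
  "fcts W H = {F. F \<subseteq> W \<and> indep H F \<and> (\<forall>y\<in>W - F. \<not> indep H (insert y F))}"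

definition leafy :: "'a set set \<Rightarrow> bool" where
  "leafy H \<longleftrightarrow> (\<forall>G \<phi>. finite G \<and> G \<noteq> {} \<and> inj_on \<phi> G \<and> (\<forall>g\<in>G. \<phi> g \<in> H \<and> g \<subseteq> \<phi> g)
     \<longrightarrow> (\<exists>g\<in>G. \<exists>a. \<forall>y\<in>g - {a}. \<forall>g'\<in>G. y \<in> g' \<longrightarrow> g' = g))"

lemma leafy_subset:
  assumes "leafy H" "H' \<subseteq> H"
  shows "leafy H'"
  unfolding leafy_def
proof (intro allI impI)
  fix G and \<phi> :: "'a set \<Rightarrow> 'a set"
  assume A: "finite G \<and> G \<noteq> {} \<and> inj_on \<phi> G \<and> (\<forall>g\<in>G. \<phi> g \<in> H' \<and> g \<subseteq> \<phi> g)"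
  then have "finite G \<and> G \<noteq> {} \<and> inj_on \<phi> G \<and> (\<forall>g\<in>G. \<phi> g \<in> H \<and> g \<subseteq> \<phi> g)"
    using assms(2) by blast
  then show "\<exists>g\<in>G. \<exists>a. \<forall>y\<in>g - {a}. \<forall>g'\<in>G. y \<in> g' \<longrightarrow> g' = g"
    using assms(1)[unfolded leafy_def, rule_format, of G \<phi>] by blast
qed

lemma leafy_image:
  assumes "leafy H"
  shows "leafy ((\<lambda>f. f - {x}) ` H)"
  unfolding leafy_def
proof (intro allI impI)
  fix G and \<phi> :: "'a set \<Rightarrow> 'a set"
  assume A: "finite G \<and> G \<noteq> {} \<and> inj_on \<phi> G \<and> (\<forall>g\<in>G. \<phi> g \<in> (\<lambda>f. f - {x}) ` H \<and> g \<subseteq> \<phi> g)"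
  define \<psi> where "\<psi> g = (SOME f. f \<in> H \<and> \<phi> g = f - {x})" for g
  have P: "\<psi> g \<in> H \<and> \<phi> g = \<psi> g - {x}" if "g \<in> G" for g
  proof -
    from A that have "\<exists>f. f \<in> H \<and> \<phi> g = f - {x}" by blast
    then show ?thesis unfolding \<psi>_def by (rule someI_ex)
  qed
  have "inj_on \<psi> G"
  proof (rule inj_onI)
    fix g1 g2 assume "g1 \<in> G" "g2 \<in> G" "\<psi> g1 = \<psi> g2"
    then have "\<phi> g1 = \<phi> g2" using P by metis
    then show "g1 = g2" using A \<open>g1 \<in> G\<close> \<open>g2 \<in> G\<close> by (meson inj_on_def)
  qed
  moreover have "\<forall>g\<in>G. \<psi> g \<in> H \<and> g \<subseteq> \<psi> g" using P A by blast
  ultimately show "\<exists>g\<in>G. \<exists>a. \<forall>y\<in>g - {a}. \<forall>g'\<in>G. y \<in> g' \<longrightarrow> g' = g"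
    using assms[unfolded leafy_def, rule_format, of G \<psi>] A by blast
qed

lemma extend_facet:
  assumes "finite W" "F \<subseteq> W" "indep H F"
  shows "\<exists>M\<in>fcts W H. F \<subseteq> M"
  using assms(2,3)
proof (induction "card (W - F)" arbitrary: F rule: less_induct)
  case less
  show ?case
  proof (cases "F \<in> fcts W H")
    case True then show ?thesis by blast
  next
    case False
    then obtain y where y: "y \<in> W - F" "indep H (insert y F)"
      using less.prems unfolding fcts_def by blast
    have "card (W - insert y F) < card (W - F)"
      using y assms(1) by (metis Diff_insert card_Diff1_less finite_Diff)
    then obtain M where "M \<in> fcts W H" "insert y F \<subseteq> M"
      using less.hyps[of "insert y F"] y less.prems by blast
    then show ?thesis by blast
  qed
qed

lemma shelling_single: "shelling_order [F]"
  unfolding shelling_order_def by simp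

lemma shell_main:
  assumes "finite W" "\<forall>e\<in>H. e \<subseteq> W" "leafy H"
  shows "\<exists>Fs. distinct Fs \<and> set Fs = fcts W H \<and> shelling_order Fs"
  using assms
proof (induction W arbitrary: H rule: finite_psubset_induct)
  case (psubset W)
  show ?case
  proof (cases "H = {}")
    case True
    then have "fcts W H = {W}" unfolding fcts_def indep_def by auto
    then show ?thesis using shelling_single[of W] by (intro exI[of _ "[W]"]) simp
  next
    case Hne: False
    show ?thesis
    proof (cases "{} \<in> H")
      case True
      then have "fcts W H = {}" unfolding fcts_def indep_def by auto
      then show ?thesis unfolding shelling_order_def by (intro exI[of _ "[]"]) simp
    next
      case False
      have finH: "finite H"
        using psubset.prems(1) psubset.hyps(1)
        by (meson Pow_iff finite_Pow_iff rev_finite_subset subsetI)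
      obtain e a where e: "e \<in> H" and ea: "\<forall>y\<in>e - {a}. \<forall>g'\<in>H. y \<in> g' \<longrightarrow> g' = e"
        using psubset.prems(2) finH Hne unfolding leafy_def
        by (metis (no_types, lifting) id_apply inj_on_id order_refl)
      have ene: "e \<noteq> {}" using e False by auto
      define x where "x = (if a \<in> e then a else (SOME z. z \<in> e))"
      have xe: "x \<in> e" unfolding x_def using ene by (auto intro: someI)
      have free: "\<forall>y\<in>e - {x}. \<forall>f\<in>H. y \<in> f \<longrightarrow> f = e"
        using ea unfolding x_def by (cases "a \<in> e") auto
      have xW: "x \<in> W" using xe e psubset.prems(1) by blast
      define W' where "W' = W - {x}"
      define Hd where "Hd = {f\<in>H. x \<notin> f}"
      define Hl where "Hl = (\<lambda>f. f - {x}) ` H"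
      have psub: "W' \<subset> W" unfolding W'_def using xW by blast
      obtain FsA where FsA: "distinct FsA" "set FsA = fcts W' Hd" "shelling_order FsA"
        using psubset.IH[OF psub, of Hd] psubset.prems leafy_subset[of H Hd]
        unfolding Hd_def W'_def by blast
      obtain FsL where FsL: "distinct FsL" "set FsL = fcts W' Hl" "shelling_order FsL"
        using psubset.IH[OF psub, of Hl] psubset.prems leafy_image[of H x]
        unfolding Hl_def W'_def by blast
      have A: "fcts W' Hd = {F \<in> fcts W H. x \<notin> F}"
      proof (intro set_eqI iffI)
        fix F assume F: "F \<in> fcts W' Hd"
        have FW: "F \<subseteq> W'" and iF: "indep Hd F" and mF: "\<forall>y\<in>W' - F. \<not> indep Hd (insert y F)"
          using F unfolding fcts_def by auto
        have xF: "x \<notin> F" using FW unfolding W'_def by blast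
        have iH: "indep H F" using iF xF unfolding indep_def Hd_def by blast
        have "\<not> indep H (insert y F)" if y: "y \<in> W - F" for y
        proof (cases "y = x")
          case True
          show ?thesis
          proof
            assume ix: "indep H (insert y F)"
            then obtain z where z: "z \<in> e" "z \<notin> insert x F"
              using e True unfolding indep_def by blast
            have zW: "z \<in> W' - F" using z e psubset.prems(1) unfolding W'_def by blast
            have "indep Hd (insert z F)"
              unfolding indep_def
            proof
              fix f assume f: "f \<in> Hd"
              show "\<not> f \<subseteq> insert z F"
              proof
                assume sub: "f \<subseteq> insert z F"
                show False
                proof (cases "z \<in> f")
                  case True
                  then have "f = e" using free z f unfolding Hd_def by blast
                  then show False using f xe unfolding Hd_def by blast
                next
                  case False
                  then have "f \<subseteq> F" using sub by blast
                  then show False using iF f unfolding indep_def by blast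
                qed
              qed
            qed
            then show False using mF zW by blast
          qed
        next
          case False
          then have "y \<in> W' - F" using y unfolding W'_def by blast
          then show ?thesis using mF unfolding indep_def Hd_def by blast
        qed
        then show "F \<in> {F \<in> fcts W H. x \<notin> F}"
          using FW iH xF unfolding fcts_def W'_def by blast
      next
        fix F assume "F \<in> {F \<in> fcts W H. x \<notin> F}"
        then have F: "F \<subseteq> W" "indep H F" "\<forall>y\<in>W - F. \<not> indep H (insert y F)" "x \<notin> F"
          unfolding fcts_def by auto
        have "\<not> indep Hd (insert y F)" if "y \<in> W' - F" for y
        proof -
          from F(3) that obtain f where "f \<in> H" "f \<subseteq> insert y F"
            unfolding indep_def W'_def by blast
          moreover have "x \<notin> f" using calculation F(4) that unfolding W'_def by blast
          ultimately show ?thesis unfolding indep_def Hd_def by blast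
        qed
        then show "F \<in> fcts W' Hd"
          using F unfolding fcts_def indep_def Hd_def W'_def by blast
      qed
      have il: "indep Hl L \<longleftrightarrow> indep H (insert x L)" for L
        unfolding indep_def Hl_def by (simp add: Diff_subset_conv)
      have B: "{F \<in> fcts W H. x \<in> F} = insert x ` fcts W' Hl"
      proof (intro set_eqI iffI)
        fix F assume "F \<in> {F \<in> fcts W H. x \<in> F}"
        then have F: "F \<subseteq> W" "indep H F" "\<forall>y\<in>W - F. \<not> indep H (insert y F)" "x \<in> F"
          unfolding fcts_def by auto
        have ins: "insert x (F - {x}) = F" using F(4) by blast
        have "F - {x} \<subseteq> W - {x}" using F(1) by blast
        moreover have "indep Hl (F - {x})" using il ins F(2) by simp
        moreover have "\<not> indep Hl (insert y (F - {x}))" if "y \<in> (W - {x}) - (F - {x})" for y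
        proof -
          have eq: "insert x (insert y (F - {x})) = insert y F" using ins by blast
          have yWF: "y \<in> W - F" using that F(4) by blast
          show ?thesis using F(3) yWF il[of "insert y (F - {x})"] eq by simp
        qed
        ultimately have "F - {x} \<in> fcts W' Hl" unfolding fcts_def W'_def by blast
        moreover have "F = insert x (F - {x})" using F(4) by blast
        ultimately show "F \<in> insert x ` fcts W' Hl" by blast
      next
        fix F assume "F \<in> insert x ` fcts W' Hl"
        then obtain L where L: "L \<in> fcts W' Hl" "F = insert x L" by blast
        have L1: "L \<subseteq> W - {x}" "indep Hl L" "\<forall>y\<in>(W - {x}) - L. \<not> indep Hl (insert y L)"
          using L(1) unfolding fcts_def W'_def by auto
        have "F \<subseteq> W" using L1(1) L(2) xW by blast
        moreover have "indep H F" using L1(2) il L(2) by simp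
        moreover have "\<not> indep H (insert y F)" if "y \<in> W - F" for y
        proof -
          have "insert y F = insert x (insert y L)" using L(2) by blast
          moreover have "y \<in> (W - {x}) - L" using that L(2) by blast
          ultimately show ?thesis using il L1(3) by simp
        qed
        ultimately show "F \<in> {F \<in> fcts W H. x \<in> F}" unfolding fcts_def using L(2) by blast
      qed
      have C: "\<exists>M\<in>fcts W' Hd. L \<subseteq> M" if L: "L \<in> fcts W' Hl" for L
      proof (rule extend_facet)
        show "finite W'" using psubset.hyps(1) unfolding W'_def by blast
        show "L \<subseteq> W'" using L unfolding fcts_def by blast
        show "indep Hd L"
          using L unfolding fcts_def indep_def Hd_def Hl_def by (auto simp: Diff_triv)
      qed
      have xnA: "x \<notin> F" if "F \<in> set FsA" for F
        using that FsA(2) A by blast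
      have xnL: "x \<notin> L" if "L \<in> set FsL" for L
        using that FsL(2) unfolding fcts_def W'_def by blast
      define Fs where "Fs = FsA @ map (insert x) FsL"
      have "distinct Fs"
      proof -
        have "inj_on (insert x) (set FsL)"
          using xnL by (intro inj_onI) (metis Diff_insert_absorb)
        then have "distinct (map (insert x) FsL)" using FsL(1) by (simp add: distinct_map)
        moreover have "set FsA \<inter> set (map (insert x) FsL) = {}" using xnA by auto
        ultimately show ?thesis unfolding Fs_def using FsA(1) by simp
      qed
      moreover have "set Fs = fcts W H"
      proof -
        have "set Fs = {F \<in> fcts W H. x \<notin> F} \<union> {F \<in> fcts W H. x \<in> F}"
          unfolding Fs_def using FsA(2) FsL(2) A B by simp
        then show ?thesis by blast
      qed
      moreover have "shelling_order Fs"
        unfolding shelling_order_def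
      proof (intro allI impI)
        fix i j assume ij: "i < j" and jl: "j < length Fs"
        define nA where "nA = length FsA"
        have lenFs: "length Fs = nA + length FsL" unfolding Fs_def nA_def by simp
        have nthA: "Fs ! k = FsA ! k" if "k < nA" for k
          unfolding Fs_def using that nA_def by (simp add: nth_append)
        have nthL: "Fs ! k = insert x (FsL ! (k - nA))" if "nA \<le> k" "k < length Fs" for k
          unfolding Fs_def using that lenFs nA_def by (simp add: nth_append)
        show "\<exists>v\<in>Fs ! j - Fs ! i. \<exists>k<j. Fs ! j - Fs ! k = {v}"
        proof (cases "j < nA")
          case True
          have "\<exists>v\<in>FsA ! j - FsA ! i. \<exists>k<j. FsA ! j - FsA ! k = {v}"
            using FsA(3)[unfolded shelling_order_def, rule_format, of i j] ij True unfolding nA_def by blast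
          then obtain v k where vk: "v \<in> FsA ! j - FsA ! i" "k < j" "FsA ! j - FsA ! k = {v}"
            by blast
          have e1: "Fs ! j = FsA ! j" using nthA True by blast
          have e2: "Fs ! i = FsA ! i" using nthA True ij by simp
          have e3: "Fs ! k = FsA ! k" using nthA True vk(2) by simp
          show ?thesis using vk e1 e2 e3 by blast
        next
          case jA: False
          show ?thesis
          proof (cases "i < nA")
            case True
            have "j - nA < length FsL" using jA jl lenFs by simp
            then have Lin: "FsL ! (j - nA) \<in> fcts W' Hl"
              using FsL(2) nth_mem by blast
            obtain M where M: "M \<in> fcts W' Hd" "FsL ! (j - nA) \<subseteq> M" using C[OF Lin] by blast
            have "M \<in> set FsA" using M(1) FsA(2) by simp
            then obtain k where k: "k < nA" "FsA ! k = M" unfolding nA_def in_set_conv_nth by blast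
            have xM: "x \<notin> M" using M(1) A by blast
            have "x \<in> Fs ! j - Fs ! i"
              using nthL[of j] jA jl nthA[OF True] xnA True nA_def by simp
            moreover have "Fs ! j - Fs ! k = {x}"
              using nthL[of j] jA jl nthA[OF k(1)] k M(2) xM by auto
            moreover have "k < j" using k jA by simp
            ultimately show ?thesis by blast
          next
            case iA: False
            have "i - nA < j - nA" "j - nA < length FsL" using ij iA jA jl lenFs by auto
            then have "\<exists>v\<in>FsL ! (j - nA) - FsL ! (i - nA). \<exists>k<j - nA. FsL ! (j - nA) - FsL ! k = {v}"
              using FsL(3)[unfolded shelling_order_def, rule_format, of "i - nA" "j - nA"] by blast
            then obtain v k where v: "v \<in> FsL ! (j - nA) - FsL ! (i - nA)" "k < j - nA"
              "FsL ! (j - nA) - FsL ! k = {v}" by blast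
            have xj: "x \<notin> FsL ! (j - nA)"
              using xnL \<open>j - nA < length FsL\<close> nth_mem by blast
            have "v \<in> Fs ! j - Fs ! i"
              using v(1) nthL[of j] nthL[of i] iA jA jl ij xj by auto
            moreover have "Fs ! j - Fs ! (k + nA) = {v}"
              using v(3) nthL[of j] nthL[of "k + nA"] jA jl v(2) xj by auto
            moreover have "k + nA < j" using v(2) by simp
            ultimately show ?thesis by blast
          qed
        qed
      qed
      ultimately show ?thesis by blast
    qed
  qed
qed

lemma edge_props:
  assumes "simple_graph V E" "{a, b} \<in> E"
  shows "a \<in> V" "b \<in> V" "a \<noteq> b"
proof -
  have "{a, b} \<subseteq> V" "card {a, b} = 2" using assms unfolding simple_graph_def by auto
  then show "a \<in> V" "b \<in> V" "a \<noteq> b" by auto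
qed

lemma edge_sym: "{a, b} \<in> E \<Longrightarrow> {b, a} \<in> E"
  by (simp add: insert_commute)

lemma nb_inj:
  assumes sg: "simple_graph V E" and nc: "\<not> has_cycle V E"
    and adj: "\<And>n. {w n, w (Suc n)} \<in> E" and nb: "\<And>n. w (Suc (Suc n)) \<noteq> w n"
  shows "inj w"
proof (rule ccontr)
  assume "\<not> inj w"
  then obtain i j where ij: "w i = w j" "i \<noteq> j" unfolding inj_def by blast
  define P where "P d = (0 < d \<and> (\<exists>i. w i = w (i + d)))" for d
  have "P (if i < j then j - i else i - j)"
    unfolding P_def using ij by (cases "i < j") (auto intro: exI[of _ i] exI[of _ j])
  then have Pd: "P (LEAST d. P d)" by (rule LeastI)
  define d where "d = (LEAST d. P d)"
  have dmin: "\<And>d'. P d' \<Longrightarrow> d \<le> d'" unfolding d_def by (rule Least_le)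
  obtain i where wi: "w i = w (i + d)" and d0: "0 < d" using Pd unfolding P_def d_def by blast
  have vert: "w n \<in> V" for n using edge_props(1)[OF sg adj[of n]] .
  have d1: "d \<noteq> 1"
  proof
    assume "d = 1"
    then show False using edge_props(3)[OF sg adj[of i]] wi by simp
  qed
  have d2: "d \<noteq> 2"
  proof
    assume "d = 2"
    then show False using nb[of i] wi by simp
  qed
  define p where "p = map w [i..<i+d]"
  have lp: "length p = d" unfolding p_def by simp
  have pn: "p ! k = w (i + k)" if "k < d" for k unfolding p_def using that by simp
  have "distinct p"
  proof (subst distinct_conv_nth, intro allI impI)
    fix a b assume a: "a < length p" and b: "b < length p" and ab: "a \<noteq> b"
    show "p ! a \<noteq> p ! b"
    proof
      assume eq: "p ! a = p ! b"
      define lo where "lo = min a b"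
      define hi where "hi = max a b"
      have wl: "w (i + lo) = w (i + lo + (hi - lo))"
        using eq pn a b lp unfolding lo_def hi_def by (cases "a < b") (auto simp: min_def max_def)
      have "lo < hi" using ab unfolding lo_def hi_def by auto
      then have "P (hi - lo)" unfolding P_def using wl by (metis add.assoc zero_less_diff)
      then have "d \<le> hi - lo" by (rule dmin)
      moreover have "hi - lo < d" using a b lp unfolding lo_def hi_def by auto
      ultimately show False by simp
    qed
  qed
  moreover have "is_walk V E p"
    unfolding is_walk_def
  proof (intro conjI allI impI)
    show "p \<noteq> []" using lp d0 by auto
    show "set p \<subseteq> V" unfolding p_def using vert by auto
    fix k assume "Suc k < length p"
    then show "{p ! k, p ! Suc k} \<in> E" using pn lp adj[of "i + k"] by simp
  qed
  moreover have "length p \<ge> 3" using lp d0 d1 d2 by simp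
  moreover have "{last p, hd p} \<in> E"
  proof -
    have pne: "p \<noteq> []" using lp d0 by auto
    have "last p = w (i + (d - 1))" using pne lp d0 pn[of "d - 1"] by (simp add: last_conv_nth)
    moreover have "hd p = w (Suc (i + (d - 1)))" using pne lp d0 pn[of 0] wi by (simp add: hd_conv_nth)
    ultimately show ?thesis using adj[of "i + (d - 1)"] by simp
  qed
  ultimately have "has_cycle V E" unfolding has_cycle_def by blast
  then show False using nc by simp
qed

lemma tree_leafy:
  assumes sg: "simple_graph V E" and nc: "\<not> has_cycle V E"
  shows "leafy (nbhd E ` V)"
  unfolding leafy_def
proof (intro allI impI)
  fix G and \<phi> :: "'a set \<Rightarrow> 'a set"
  assume A: "finite G \<and> G \<noteq> {} \<and> inj_on \<phi> G \<and> (\<forall>g\<in>G. \<phi> g \<in> nbhd E ` V \<and> g \<subseteq> \<phi> g)"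
  show "\<exists>g\<in>G. \<exists>a. \<forall>y\<in>g - {a}. \<forall>g'\<in>G. y \<in> g' \<longrightarrow> g' = g"
  proof (rule ccontr)
    assume "\<not> ?thesis"
    then have st: "\<forall>g\<in>G. \<forall>a. \<exists>y\<in>g - {a}. \<exists>g'\<in>G. y \<in> g' \<and> g' \<noteq> g" by simp
    have "\<forall>g\<in>G. \<exists>u. u \<in> V \<and> \<phi> g = nbhd E u" using A by blast
    then obtain v where v: "\<forall>g\<in>G. v g \<in> V \<and> \<phi> g = nbhd E (v g)" by metis
    have vinj: "g1 = g2" if "v g1 = v g2" "g1 \<in> G" "g2 \<in> G" for g1 g2
    proof -
      have "\<phi> g1 = \<phi> g2" using v that by simp
      then show ?thesis using A that by (meson inj_on_def)
    qed
    have sub: "{c, v g} \<in> E" if "g \<in> G" "c \<in> g" for g c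
      using that A v unfolding nbhd_def by blast
    define nxt where "nxt q = (SOME q'. fst q' \<in> snd q - {fst q} \<and> snd q' \<in> G \<and> fst q' \<in> snd q' \<and> snd q' \<noteq> snd q)"
      for q :: "'a \<times> 'a set"
    have nxtP: "fst (nxt q) \<in> snd q - {fst q} \<and> snd (nxt q) \<in> G \<and> fst (nxt q) \<in> snd (nxt q) \<and> snd (nxt q) \<noteq> snd q"
      if "snd q \<in> G" for q
    proof -
      have ex: "\<exists>y\<in>snd q - {fst q}. \<exists>g'\<in>G. y \<in> g' \<and> g' \<noteq> snd q"
        by (rule st[rule_format, OF that])
      then obtain y g' where "y \<in> snd q - {fst q}" "g' \<in> G" "y \<in> g'" "g' \<noteq> snd q"
        by blast
      then have "\<exists>q'. fst q' \<in> snd q - {fst q} \<and> snd q' \<in> G \<and> fst q' \<in> snd q' \<and> snd q' \<noteq> snd q"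
        by (intro exI[of _ "(y, g')"]) simp
      then show ?thesis unfolding nxt_def by (rule someI_ex)
    qed
    obtain g0 where g0: "g0 \<in> G" using A by blast
    define p where "p n = (nxt ^^ n) (undefined, g0)" for n
    have pS: "p (Suc n) = nxt (p n)" for n unfolding p_def by simp
    have pG: "snd (p n) \<in> G" for n
    proof (induction n)
      case 0 then show ?case using g0 by (simp add: p_def)
    next
      case (Suc n) then show ?case using pS nxtP by simp
    qed
    have pP: "fst (p (Suc n)) \<in> snd (p n) - {fst (p n)} \<and> snd (p (Suc n)) \<in> G
        \<and> fst (p (Suc n)) \<in> snd (p (Suc n)) \<and> snd (p (Suc n)) \<noteq> snd (p n)" for n
      using nxtP[OF pG[of n]] pS[of n] by simp
    define w where "w n = (if even n then v (snd (p (n div 2))) else fst (p (Suc (n div 2))))" for n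
    have wE1: "w (2*m) = v (snd (p m))" for m unfolding w_def by simp
    have wE2: "w (Suc (2*m)) = fst (p (Suc m))" for m unfolding w_def by simp
    have adj: "{w n, w (Suc n)} \<in> E" for n
    proof (cases "even n")
      case True
      then obtain m where n: "n = 2*m" by blast
      have "fst (p (Suc m)) \<in> snd (p m)" using pP[of m] by blast
      then have e: "{fst (p (Suc m)), v (snd (p m))} \<in> E" by (rule sub[OF pG])
      have w1: "w n = v (snd (p m))" using n wE1 by simp
      have w2: "w (Suc n) = fst (p (Suc m))" using n wE2 by simp
      show ?thesis unfolding w1 w2 by (rule edge_sym[OF e])
    next
      case False
      define m where "m = n div 2"
      have n: "n = Suc (2*m)" using False unfolding m_def by presburger
      have "fst (p (Suc m)) \<in> snd (p (Suc m))" using pP[of m] by blast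
      then have e: "{fst (p (Suc m)), v (snd (p (Suc m)))} \<in> E" by (rule sub[OF pG])
      have "Suc n = 2 * Suc m" using n by simp
      then have w1: "w (Suc n) = v (snd (p (Suc m)))" using wE1[of "Suc m"] by (simp only:)
      have w2: "w n = fst (p (Suc m))" using n wE2 by simp
      show ?thesis unfolding w1 w2 by (rule e)
    qed
    have nb: "w (Suc (Suc n)) \<noteq> w n" for n
    proof (cases "even n")
      case True
      then obtain m where n: "n = 2*m" by blast
      have "Suc (Suc n) = 2 * Suc m" using n by simp
      then have "w (Suc (Suc n)) = v (snd (p (Suc m)))" using wE1[of "Suc m"] by (simp only:)
      moreover have "w n = v (snd (p m))" using n wE1 by simp
      moreover have "v (snd (p (Suc m))) \<noteq> v (snd (p m))"
        using vinj[of "snd (p (Suc m))" "snd (p m)"] pG[of m] pG[of "Suc m"] pP[of m] by blast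
      ultimately show ?thesis by simp
    next
      case False
      define m where "m = n div 2"
      have n: "n = Suc (2*m)" using False unfolding m_def by presburger
      have "Suc (Suc n) = Suc (2 * Suc m)" using n by simp
      then have "w (Suc (Suc n)) = fst (p (Suc (Suc m)))" using wE2[of "Suc m"] by (simp only:)
      moreover have "w n = fst (p (Suc m))" using n wE2 by simp
      moreover have "fst (p (Suc (Suc m))) \<noteq> fst (p (Suc m))" using pP[of "Suc m"] by blast
      ultimately show ?thesis by simp
    qed
    have iw: "inj w" by (rule nb_inj[of V E w, OF sg nc adj nb])
    have rw: "range w \<subseteq> V" using edge_props(1)[OF sg adj] by blast
    have fV: "finite V" using sg unfolding simple_graph_def by blast
    have "finite (range w)" by (rule finite_subset[OF rw fV])
    then have "finite (UNIV :: nat set)" by (rule finite_imageD[OF _ iw])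
    then show False by simp
  qed
qed

lemma stable_eq:
  assumes sg: "simple_graph V E"
  shows "stable_complex_facets V E = fcts V (nbhd E ` V)"
proof -
  have nsub: "{u. \<exists>d\<in>D. {u, d} \<in> E} \<subseteq> V" for D using edge_props(1)[OF sg] by blast
  have TD: "total_dom_set V E D \<longleftrightarrow> D \<subseteq> V \<and> (\<forall>v\<in>V. \<exists>d\<in>D. {v, d} \<in> E)" for D
  proof -
    have "nbhd_set E D = {u. \<exists>d\<in>D. {u, d} \<in> E}" unfolding nbhd_set_def nbhd_def by blast
    then show ?thesis unfolding total_dom_set_def using nsub[of D] by blast
  qed
  have IND: "indep (nbhd E ` V) (V - D) \<longleftrightarrow> total_dom_set V E D" if "D \<subseteq> V" for D
  proof -
    have one: "(\<not> nbhd E v \<subseteq> V - D) \<longleftrightarrow> (\<exists>d\<in>D. {v, d} \<in> E)" for v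
    proof -
      have "(\<not> nbhd E v \<subseteq> V - D) \<longleftrightarrow> (\<exists>u. {u, v} \<in> E \<and> u \<in> D)"
        unfolding nbhd_def using edge_props(1)[OF sg] by blast
      also have "\<dots> \<longleftrightarrow> (\<exists>d\<in>D. {v, d} \<in> E)"
      proof
        assume "\<exists>u. {u, v} \<in> E \<and> u \<in> D"
        then obtain u where "{u, v} \<in> E" "u \<in> D" by (elim exE conjE)
        then show "\<exists>d\<in>D. {v, d} \<in> E" using edge_sym by (intro bexI[of _ u])
      next
        assume "\<exists>d\<in>D. {v, d} \<in> E"
        then obtain u where "{v, u} \<in> E" "u \<in> D" by (elim bexE)
        then show "\<exists>u. {u, v} \<in> E \<and> u \<in> D" using edge_sym by (intro exI[of _ u] conjI)
      qed
      finally show ?thesis .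
    qed
    have "indep (nbhd E ` V) (V - D) \<longleftrightarrow> (\<forall>v\<in>V. \<exists>d\<in>D. {v, d} \<in> E)"
      unfolding indep_def using one by blast
    then show ?thesis using TD that by blast
  qed
  show ?thesis
  proof (intro set_eqI iffI)
    fix X assume "X \<in> stable_complex_facets V E"
    then obtain D where X: "X = V - D" and D: "minimal_total_dom_set V E D"
      unfolding stable_complex_facets_def by blast
    have DV: "D \<subseteq> V" using D unfolding minimal_total_dom_set_def total_dom_set_def by blast
    have "indep (nbhd E ` V) X" using IND[OF DV] D X unfolding minimal_total_dom_set_def by blast
    moreover have "\<not> indep (nbhd E ` V) (insert y X)" if y: "y \<in> V - X" for y
    proof
      assume i: "indep (nbhd E ` V) (insert y X)"
      have "insert y X = V - (D - {y})" using X y by blast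
      then have "total_dom_set V E (D - {y})" using IND[of "D - {y}"] i DV by auto
      moreover have "D - {y} \<subset> D" using X y by blast
      ultimately show False using D unfolding minimal_total_dom_set_def by blast
    qed
    ultimately show "X \<in> fcts V (nbhd E ` V)" unfolding fcts_def using X by blast
  next
    fix F assume F: "F \<in> fcts V (nbhd E ` V)"
    define D where "D = V - F"
    have FD: "F = V - D" using F unfolding D_def fcts_def by blast
    have DV: "D \<subseteq> V" unfolding D_def by blast
    have td: "total_dom_set V E D" using IND[OF DV] F FD unfolding fcts_def by blast
    have "\<not> total_dom_set V E D'" if sub: "D' \<subset> D" for D'
    proof
      assume td': "total_dom_set V E D'"
      obtain y where y: "y \<in> D" "y \<notin> D'" using sub by blast
      have "total_dom_set V E (D - {y})"
        using td' sub y DV unfolding TD by blast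
      then have "indep (nbhd E ` V) (V - (D - {y}))" using IND[of "D - {y}"] DV by blast
      moreover have "V - (D - {y}) = insert y F" using FD y DV by blast
      moreover have "y \<in> V - F" using y DV FD by blast
      moreover have "\<forall>y\<in>V - F. \<not> indep (nbhd E ` V) (insert y F)" using F unfolding fcts_def by blast
      ultimately have "indep (nbhd E ` V) (insert y F)" "\<not> indep (nbhd E ` V) (insert y F)" by auto
      then show False by blast
    qed
    then have "minimal_total_dom_set V E D" using td unfolding minimal_total_dom_set_def by blast
    then show "F \<in> stable_complex_facets V E" unfolding stable_complex_facets_def using FD by blast
  qed
qed

theorem theorem4p25:
  fixes V :: "'a set" and E :: "'a set set"
  assumes "is_tree V E"
    and "unmixed V E"
  shows "shellable (stable_complex_facets V E)"
proof -
  have sg: "simple_graph V E" and nc: "\<not> has_cycle V E"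
    using assms(1) unfolding is_tree_def by auto
  have finV: "finite V" using sg unfolding simple_graph_def by blast
  have "pure_facets (stable_complex_facets V E)"
    unfolding pure_facets_def
  proof (intro ballI)
    fix F G assume "F \<in> stable_complex_facets V E" "G \<in> stable_complex_facets V E"
    then obtain D1 D2 where D: "F = V - D1" "minimal_total_dom_set V E D1"
      "G = V - D2" "minimal_total_dom_set V E D2"
      unfolding stable_complex_facets_def by blast
    have "D1 \<subseteq> V" "D2 \<subseteq> V" using D unfolding minimal_total_dom_set_def total_dom_set_def by auto
    moreover have "card D1 = card D2" using assms(2) D unfolding unmixed_def by blast
    ultimately show "card F = card G" using D finV
      by (simp add: card_Diff_subset rev_finite_subset)
  qed
  moreover have "\<exists>Fs. distinct Fs \<and> set Fs = fcts V (nbhd E ` V) \<and> shelling_order Fs"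
  proof (rule shell_main[OF finV])
    show "\<forall>e\<in>nbhd E ` V. e \<subseteq> V" unfolding nbhd_def using edge_props(1)[OF sg] by blast
    show "leafy (nbhd E ` V)" by (rule tree_leafy[OF sg nc])
  qed
  moreover have "stable_complex_facets V E = fcts V (nbhd E ` V)" by (rule stable_eq[OF sg])
  ultimately show ?thesis unfolding shellable_def by simp
qed

end
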